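(* Let $\mathfrak M$ be a D2-brane, $M_\Lambda = \{\vec x \in \mathbb R^3, \ker(D_x)\not=0\}$ its eigenmanifold, and $M_\Lambda \ni x \mapsto |\Lambda(x) \rangle \hspace{-0.2em} \rangle \in \ker D_x$ a normalised quasicoherent state. Then: 1. $\langle \hspace{-0.2em} \langle \Lambda(\vec x)|\vec X|\Lambda(\vec x)\rangle \hspace{-0.2em} \rangle = \vec x$; 2. $\langle \hspace{-0.2em} \langle \Lambda(\vec x)|\vec \sigma|\Lambda(\vec x)\rangle \hspace{-0.2em} \rangle \in N_xM_\Lambda$ (it is a normal vector of the eigenmanifold at $x$); 3. $\Delta_x \vec X^2 = \frac{1}{2} {\varepsilon_{ij}}^k \langle \hspace{-0.2em} \langle \Lambda(x)|\sigma_k \otimes \Theta^{ij}|\Lambda(x)\rangle \hspace{-0.2em} \rangle$ (the Heisenberg uncertainty is minimised).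
   Context: A noncommutative D2-brane $\mathfrak M = (\mathfrak X,\mathbb C^2\otimes \mathscr F, D_x)$ is a spectral triple where $\mathscr F$ is a separable Hilbert space, $\mathfrak X$ a $*$-algebra of operators on $\mathscr F$, and $D_x = \sigma_i \otimes (X^i-x^i)$ its Dirac operator with $(\sigma_i)$ the Pauli matrices, $(X^i)$ self-adjoint operators of $\mathfrak X$ and $x\in\mathbb R^3$. $[X^i,X^j]=\imath\Theta^{ij}$, and $\Delta_x \vec X^2 = \langle \hspace{-0.2em} \langle \Lambda(x)|\vec X^2|\Lambda(x)\rangle \hspace{-0.2em} \rangle - \langle \hspace{-0.2em} \langle \Lambda(x)|\vec X|\Lambda(x)\rangle \hspace{-0.2em} \rangle^2$ with $\vec X^2=\delta_{ij}X^iX^j$. *)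

theory Defs
  imports "HOL-Analysis.Analysis"
begin

text \<open>The separable Hilbert space F is modelled (up to unitary isomorphism) as
  l2 over a countable index type 'i (finite or countably infinite).
  Vectors of C^2 (x) F are pairs of vectors of F.\<close>

type_synonym 'i vec = "'i \<Rightarrow> complex"
type_synonym 'i op = "'i vec \<Rightarrow> 'i vec"
type_synonym 'i spinor = "'i vec \<times> 'i vec"

definition ell2 :: "('i::countable) vec set" where
  "ell2 = {f. (\<lambda>n. (cmod (f n))\<^sup>2) summable_on UNIV}"

definition inner2 :: "('i::countable) vec \<Rightarrow> 'i vec \<Rightarrow> complex" where
  "inner2 f g = infsum (\<lambda>n. cnj (f n) * g n) UNIV"

definition norm2 :: "('i::countable) vec \<Rightarrow> real" where
  "norm2 f = sqrt (Re (inner2 f f))"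

definition dense_subspace :: "('i::countable) vec set \<Rightarrow> bool" where
  "dense_subspace Dom \<longleftrightarrow> Dom \<subseteq> ell2 \<and> (\<lambda>_. 0) \<in> Dom
     \<and> (\<forall>a f g. f \<in> Dom \<longrightarrow> g \<in> Dom \<longrightarrow> (\<lambda>n. a * f n + g n) \<in> Dom)
     \<and> (\<forall>f\<in>ell2. \<forall>e>0. \<exists>g\<in>Dom. norm2 (\<lambda>n. f n - g n) < e)"

text \<open>A (possibly unbounded) self-adjoint operator on the invariant domain Dom:
  linear, leaves Dom invariant, and Hermitian on Dom.\<close>
definition sa_op_on :: "('i::countable) vec set \<Rightarrow> 'i op \<Rightarrow> bool" where
  "sa_op_on Dom A \<longleftrightarrow> A ` Dom \<subseteq> Dom
     \<and> (\<forall>a f g. f \<in> Dom \<longrightarrow> g \<in> Dom \<longrightarrow> A (\<lambda>n. a * f n + g n) = (\<lambda>n. a * A f n + A g n))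
     \<and> (\<forall>f\<in>Dom. \<forall>g\<in>Dom. inner2 (A f) g = inner2 f (A g))"

definition pauli :: "3 \<Rightarrow> complex^2^2" where
  "pauli k = (if k = 1 then vector [vector [0, 1], vector [1, 0]]
              else if k = 2 then vector [vector [0, -\<i>], vector [\<i>, 0]]
              else vector [vector [1, 0], vector [0, -1]])"

definition sigma_tensor :: "3 \<Rightarrow> ('i::countable) op \<Rightarrow> 'i spinor \<Rightarrow> 'i spinor" where
  "sigma_tensor k A \<psi> =
     ((\<lambda>n. pauli k $ 1 $ 1 * A (fst \<psi>) n + pauli k $ 1 $ 2 * A (snd \<psi>) n),
      (\<lambda>n. pauli k $ 2 $ 1 * A (fst \<psi>) n + pauli k $ 2 $ 2 * A (snd \<psi>) n))"

definition id_tensor :: "('i::countable) op \<Rightarrow> 'i spinor \<Rightarrow> 'i spinor" where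
  "id_tensor A \<psi> = (A (fst \<psi>), A (snd \<psi>))"

definition spinor_inner :: "('i::countable) spinor \<Rightarrow> 'i spinor \<Rightarrow> complex" where
  "spinor_inner \<phi> \<psi> = inner2 (fst \<phi>) (fst \<psi>) + inner2 (snd \<phi>) (snd \<psi>)"

definition spinor_norm :: "('i::countable) spinor \<Rightarrow> real" where
  "spinor_norm \<psi> = sqrt (Re (spinor_inner \<psi> \<psi>))"

definition expect :: "('i::countable) spinor \<Rightarrow> ('i spinor \<Rightarrow> 'i spinor) \<Rightarrow> complex" where
  "expect \<psi> T = spinor_inner \<psi> (T \<psi>)"

definition dirac :: "(3 \<Rightarrow> ('i::countable) op) \<Rightarrow> real^3 \<Rightarrow> 'i spinor \<Rightarrow> 'i spinor" where
  "dirac X x \<psi> =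
     (let S = (\<lambda>k. sigma_tensor k (\<lambda>f n. X k f n - complex_of_real (x $ k) * f n) \<psi>)
      in ((\<lambda>n. \<Sum>k\<in>UNIV. fst (S k) n), (\<lambda>n. \<Sum>k\<in>UNIV. snd (S k) n)))"

definition dirac_kernel :: "('i::countable) vec set \<Rightarrow> (3 \<Rightarrow> 'i op) \<Rightarrow> real^3 \<Rightarrow> 'i spinor set" where
  "dirac_kernel Dom X x = {\<psi>. fst \<psi> \<in> Dom \<and> snd \<psi> \<in> Dom \<and> dirac X x \<psi> = ((\<lambda>_. 0), (\<lambda>_. 0))}"

definition eigenmanifold :: "('i::countable) vec set \<Rightarrow> (3 \<Rightarrow> 'i op) \<Rightarrow> (real^3) set" where
  "eigenmanifold Dom X = {x. \<exists>\<psi>\<in>dirac_kernel Dom X x. \<psi> \<noteq> ((\<lambda>_. 0), (\<lambda>_. 0))}"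

text \<open>Theta^{ij} defined by [X^i, X^j] = i Theta^{ij}.\<close>
definition Theta :: "(3 \<Rightarrow> ('i::countable) op) \<Rightarrow> 3 \<Rightarrow> 3 \<Rightarrow> 'i op" where
  "Theta X i j f = (\<lambda>n. - \<i> * (X i (X j f) n - X j (X i f) n))"

definition Xsq :: "(3 \<Rightarrow> ('i::countable) op) \<Rightarrow> 'i op" where
  "Xsq X f = (\<lambda>n. \<Sum>k\<in>UNIV. X k (X k f) n)"

definition uncertainty :: "(3 \<Rightarrow> ('i::countable) op) \<Rightarrow> 'i spinor \<Rightarrow> complex" where
  "uncertainty X \<psi> = expect \<psi> (id_tensor (Xsq X)) - (\<Sum>k\<in>UNIV. (expect \<psi> (id_tensor (X k)))\<^sup>2)"

definition levi_civita :: "3 \<Rightarrow> 3 \<Rightarrow> 3 \<Rightarrow> real" where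
  "levi_civita i j k =
     (if (i, j, k) \<in> {(1, 2, 3), (2, 3, 1), (3, 1, 2)} then 1
      else if (i, j, k) \<in> {(1, 3, 2), (3, 2, 1), (2, 1, 3)} then -1 else 0)"

definition tangent_vectors :: "(real^3) set \<Rightarrow> real^3 \<Rightarrow> (real^3) set" where
  "tangent_vectors S x = {v. \<exists>\<gamma> e. e > 0 \<and> \<gamma> 0 = x \<and> (\<forall>t\<in>{-e<..<e}. \<gamma> t \<in> S)
                                 \<and> (\<gamma> has_vector_derivative v) (at 0)}"

definition normal_vectors_at :: "(real^3) set \<Rightarrow> real^3 \<Rightarrow> (real^3) set" where
  "normal_vectors_at S x = {w. \<forall>v\<in>tangent_vectors S x. w \<bullet> v = 0}"

end

theory Submission
  imports Defs
begin

lemma ell2_sq: "f \<in> ell2 \<Longrightarrow> (\<lambda>n. (cmod (f n))\<^sup>2) summable_on UNIV"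
  by (simp add: ell2_def)

lemma sq_sum_le: "((u::real) + v)\<^sup>2 \<le> 2 * u\<^sup>2 + 2 * v\<^sup>2"
proof -
  have "0 \<le> (u - v)\<^sup>2" by simp
  thus ?thesis by (simp add: power2_diff power2_sum)
qed

lemma summable_div: "f summable_on A \<Longrightarrow> (\<lambda>x. f x / (c::real)) summable_on A"
  by (simp add: divide_inverse summable_on_cmult_left)
lemma summable_mulc: "f summable_on A \<Longrightarrow> (\<lambda>x. (c::real) * f x) summable_on A"
  by (simp add: summable_on_cmult_right)
lemma infsum_div: "infsum (\<lambda>x. f x / (c::real)) A = infsum f A / c"
  by (simp add: divide_inverse infsum_cmult_left')
lemma infsum_mulc: "infsum (\<lambda>x. (c::real) * f x) A = c * infsum f A"
  by (simp add: infsum_cmult_right')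

lemma ell2_lin:
  assumes "f \<in> ell2" "g \<in> ell2"
  shows "(\<lambda>n. a * f n + g n) \<in> ell2"
proof -
  have s: "(\<lambda>n. 2 * (cmod a)\<^sup>2 * (cmod (f n))\<^sup>2 + 2 * (cmod (g n))\<^sup>2) summable_on UNIV"
    using assms by (intro summable_on_add summable_on_cmult_right) (auto simp: ell2_def)
  have "(\<lambda>n. (cmod (a * f n + g n))\<^sup>2) summable_on UNIV"
  proof (rule summable_on_comparison_test[OF s])
    fix n
    have "cmod (a * f n + g n) \<le> cmod a * cmod (f n) + cmod (g n)"
      by (metis norm_mult norm_triangle_ineq)
    hence "(cmod (a * f n + g n))\<^sup>2 \<le> (cmod a * cmod (f n) + cmod (g n))\<^sup>2"
      by (simp add: power_mono)
    also have "\<dots> \<le> 2 * (cmod a * cmod (f n))\<^sup>2 + 2 * (cmod (g n))\<^sup>2" by (rule sq_sum_le)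
    finally show "(cmod (a * f n + g n))\<^sup>2 \<le> 2 * (cmod a)\<^sup>2 * (cmod (f n))\<^sup>2 + 2 * (cmod (g n))\<^sup>2"
      by (simp add: power_mult_distrib)
  qed auto
  thus ?thesis by (simp add: ell2_def)
qed

lemma ell2_add[simp]: "f \<in> ell2 \<Longrightarrow> g \<in> ell2 \<Longrightarrow> (\<lambda>n. f n + g n) \<in> ell2"
  using ell2_lin[of f g 1] by simp
lemma ell2_zero[simp]: "(\<lambda>n. 0) \<in> ell2"
  by (simp add: ell2_def)
lemma ell2_scale[simp]: "f \<in> ell2 \<Longrightarrow> (\<lambda>n. a * f n) \<in> ell2"
  using ell2_lin[of f "\<lambda>n. 0" a] by simp
lemma ell2_diff[simp]: "f \<in> ell2 \<Longrightarrow> g \<in> ell2 \<Longrightarrow> (\<lambda>n. f n - g n) \<in> ell2"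
  using ell2_lin[of g f "-1"] by simp
lemma ell2_minus[simp]: "f \<in> ell2 \<Longrightarrow> (\<lambda>n. - f n) \<in> ell2"
  using ell2_scale[of f "-1"] by simp

lemma prod_abs_summable:
  assumes "f \<in> ell2" "g \<in> ell2"
  shows "(\<lambda>n. cmod (f n) * cmod (g n)) summable_on UNIV"
proof (rule summable_on_comparison_test)
  show "(\<lambda>n. (cmod (f n))\<^sup>2 / 2 + (cmod (g n))\<^sup>2 / 2) summable_on UNIV"
    using assms by (intro summable_on_add summable_div) (auto simp: ell2_def)
  fix n
  show "cmod (f n) * cmod (g n) \<le> (cmod (f n))\<^sup>2 / 2 + (cmod (g n))\<^sup>2 / 2"
  proof -
    have "0 \<le> (cmod (f n) - cmod (g n))\<^sup>2" by simp
    thus ?thesis by (simp add: power2_diff)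
  qed
qed auto

lemma ip_abs_summable:
  assumes "f \<in> ell2" "g \<in> ell2"
  shows "(\<lambda>n. norm (cnj (f n) * g n)) summable_on UNIV"
  using prod_abs_summable[OF assms] by (simp add: norm_mult)

lemma ip_summable:
  assumes "f \<in> ell2" "g \<in> ell2"
  shows "(\<lambda>n. cnj (f n) * g n) summable_on UNIV"
  by (rule abs_summable_summable[OF ip_abs_summable[OF assms]])

lemma ip_cnj: "inner2 g f = cnj (inner2 f g)"
  unfolding inner2_def by (simp flip: infsum_cnj add: mult.commute)

lemma ip_lin2:
  assumes "f \<in> ell2" "g \<in> ell2" "h \<in> ell2"
  shows "inner2 f (\<lambda>n. a * g n + h n) = a * inner2 f g + inner2 f h"
proof -
  have "inner2 f (\<lambda>n. a * g n + h n) = infsum (\<lambda>n. a * (cnj (f n) * g n) + cnj (f n) * h n) UNIV"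
    unfolding inner2_def by (simp add: algebra_simps)
  also have "\<dots> = infsum (\<lambda>n. a * (cnj (f n) * g n)) UNIV + infsum (\<lambda>n. cnj (f n) * h n) UNIV"
    using assms by (intro infsum_add summable_on_cmult_right ip_summable)
  also have "\<dots> = a * inner2 f g + inner2 f h"
    unfolding inner2_def using assms by (subst infsum_cmult_right) (auto intro: ip_summable)
  finally show ?thesis .
qed

lemma ip_add2[simp]: "f \<in> ell2 \<Longrightarrow> g \<in> ell2 \<Longrightarrow> h \<in> ell2 \<Longrightarrow>
   inner2 f (\<lambda>n. g n + h n) = inner2 f g + inner2 f h"
  using ip_lin2[of f g h 1] by simp
lemma ip_zero2[simp]: "inner2 f (\<lambda>n. 0) = 0"
  by (simp add: inner2_def)
lemma ip_zero1[simp]: "inner2 (\<lambda>n. 0) f = 0"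
  by (simp add: inner2_def)
lemma ip_scale2[simp]: "f \<in> ell2 \<Longrightarrow> g \<in> ell2 \<Longrightarrow>
   inner2 f (\<lambda>n. a * g n) = a * inner2 f g"
  using ip_lin2[of f g "\<lambda>n. 0" a] by simp
lemma ip_diff2[simp]: "f \<in> ell2 \<Longrightarrow> g \<in> ell2 \<Longrightarrow> h \<in> ell2 \<Longrightarrow>
   inner2 f (\<lambda>n. g n - h n) = inner2 f g - inner2 f h"
  using ip_lin2[of f h g "-1"] by simp
lemma ip_minus2[simp]: "f \<in> ell2 \<Longrightarrow> g \<in> ell2 \<Longrightarrow>
   inner2 f (\<lambda>n. - g n) = - inner2 f g"
  using ip_scale2[of f g "-1"] by simp
lemma ip_add1[simp]: "f \<in> ell2 \<Longrightarrow> g \<in> ell2 \<Longrightarrow> h \<in> ell2 \<Longrightarrow>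
   inner2 (\<lambda>n. g n + h n) f = inner2 g f + inner2 h f"
  by (subst (1 2 3) ip_cnj) simp
lemma ip_scale1[simp]: "f \<in> ell2 \<Longrightarrow> g \<in> ell2 \<Longrightarrow>
   inner2 (\<lambda>n. a * g n) f = cnj a * inner2 g f"
  by (subst (1 2) ip_cnj) simp
lemma ip_diff1[simp]: "f \<in> ell2 \<Longrightarrow> g \<in> ell2 \<Longrightarrow> h \<in> ell2 \<Longrightarrow>
   inner2 (\<lambda>n. g n - h n) f = inner2 g f - inner2 h f"
  by (subst (1 2 3) ip_cnj) simp
lemma ip_minus1[simp]: "f \<in> ell2 \<Longrightarrow> g \<in> ell2 \<Longrightarrow>
   inner2 (\<lambda>n. - g n) f = - inner2 g f"
  by (subst (1 2) ip_cnj) simp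

lemma ip_self_Re:
  assumes "f \<in> ell2"
  shows "Re (inner2 f f) = infsum (\<lambda>n. (cmod (f n))\<^sup>2) UNIV"
proof -
  have "Re (inner2 f f) = infsum (\<lambda>n. Re (cnj (f n) * f n)) UNIV"
    unfolding inner2_def by (rule infsum_Re[symmetric]) (rule ip_summable[OF assms assms])
  also have "\<dots> = infsum (\<lambda>n. (cmod (f n))\<^sup>2) UNIV"
    by (metis Re_complex_of_real complex_norm_square mult.commute)
  finally show ?thesis .
qed

lemma ip_self_nonneg: "f \<in> ell2 \<Longrightarrow> Re (inner2 f f) \<ge> 0"
  by (simp add: ip_self_Re infsum_nonneg)

lemma ip_bound:
  assumes "f \<in> ell2" "g \<in> ell2" "t > 0"
  shows "cmod (inner2 f g) \<le> t / 2 * Re (inner2 f f) + Re (inner2 g g) / (2 * t)"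
proof -
  have "cmod (inner2 f g) \<le> infsum (\<lambda>n. norm (cnj (f n) * g n)) UNIV"
    unfolding inner2_def by (rule norm_infsum_bound[OF ip_abs_summable[OF assms(1,2)]])
  also have "\<dots> \<le> infsum (\<lambda>n. t / 2 * (cmod (f n))\<^sup>2 + (cmod (g n))\<^sup>2 / (2 * t)) UNIV"
  proof (rule infsum_mono)
    show "(\<lambda>n. norm (cnj (f n) * g n)) summable_on UNIV"
      using prod_abs_summable[OF assms(1,2)] by (simp add: norm_mult)
    show "(\<lambda>n. t / 2 * (cmod (f n))\<^sup>2 + (cmod (g n))\<^sup>2 / (2 * t)) summable_on UNIV"
      using assms by (intro summable_on_add summable_div summable_mulc) (auto simp: ell2_def)
    fix n
    have "0 \<le> (t * cmod (f n) - cmod (g n))\<^sup>2" by simp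
    hence "2 * t * (cmod (f n) * cmod (g n)) \<le> t\<^sup>2 * (cmod (f n))\<^sup>2 + (cmod (g n))\<^sup>2"
      by (simp add: power2_diff power_mult_distrib algebra_simps)
    hence "cmod (f n) * cmod (g n) \<le> (t\<^sup>2 * (cmod (f n))\<^sup>2 + (cmod (g n))\<^sup>2) / (2 * t)"
      using assms(3) by (simp add: field_simps)
    also have "\<dots> = t / 2 * (cmod (f n))\<^sup>2 + (cmod (g n))\<^sup>2 / (2 * t)"
      using assms(3) by (simp add: field_simps power2_eq_square)
    finally show "norm (cnj (f n) * g n) \<le> t / 2 * (cmod (f n))\<^sup>2 + (cmod (g n))\<^sup>2 / (2 * t)"
      by (simp add: norm_mult)
  qed
  also have "\<dots> = t / 2 * infsum (\<lambda>n. (cmod (f n))\<^sup>2) UNIV + infsum (\<lambda>n. (cmod (g n))\<^sup>2) UNIV / (2 * t)"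
    using assms
    by (subst infsum_add) (auto simp: ell2_def infsum_div infsum_mulc intro!: summable_div summable_mulc)
  finally show ?thesis using assms by (simp add: ip_self_Re)
qed

definition Yop :: "(3 \<Rightarrow> ('i::countable) op) \<Rightarrow> real^3 \<Rightarrow> 3 \<Rightarrow> 'i vec \<Rightarrow> 'i vec" where
  "Yop X x k f = (\<lambda>n. X k f n - complex_of_real (x $ k) * f n)"

lemma pauli_vals:
  "pauli 1 $ 1 $ 1 = 0" "pauli 1 $ 1 $ 2 = 1" "pauli 1 $ 2 $ 1 = 1" "pauli 1 $ 2 $ 2 = 0"
  "pauli 2 $ 1 $ 1 = 0" "pauli 2 $ 1 $ 2 = -\<i>" "pauli 2 $ 2 $ 1 = \<i>" "pauli 2 $ 2 $ 2 = 0"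
  "pauli 3 $ 1 $ 1 = 1" "pauli 3 $ 1 $ 2 = 0" "pauli 3 $ 2 $ 1 = 0" "pauli 3 $ 2 $ 2 = -1"
  by (simp_all add: pauli_def)

lemma levi_vals:
  "levi_civita 1 2 3 = 1" "levi_civita 2 3 1 = 1" "levi_civita 3 1 2 = 1"
  "levi_civita 1 3 2 = -1" "levi_civita 3 2 1 = -1" "levi_civita 2 1 3 = -1"
  "levi_civita i i k = 0" "levi_civita i k i = 0" "levi_civita k i i = 0"
  by (auto simp: levi_civita_def)

lemma dirac_eqs:
  assumes "dirac X x (a, b) = ((\<lambda>_. 0), (\<lambda>_. 0))"
  shows "(\<lambda>n. Yop X x 3 a n + Yop X x 1 b n - \<i> * Yop X x 2 b n) = (\<lambda>n. 0)"
    and "(\<lambda>n. Yop X x 1 a n + \<i> * Yop X x 2 a n - Yop X x 3 b n) = (\<lambda>n. 0)"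
  using assms
  by (auto simp: dirac_def Let_def sigma_tensor_def sum_3 pauli_vals Yop_def fun_eq_iff algebra_simps)

lemma ip_expand:
  assumes "u \<in> ell2" "v \<in> ell2" "f \<in> ell2" "g \<in> ell2"
  shows "inner2 (\<lambda>n. u n + complex_of_real c * f n) (\<lambda>n. v n + complex_of_real d * g n)
      = inner2 u v + complex_of_real d * inner2 u g + complex_of_real c * inner2 f v + complex_of_real c * complex_of_real d * inner2 f g"
  using assms apply simp apply (simp add: algebra_simps)? done

lemma X_Y: "X k f = (\<lambda>n. Yop X x k f n + complex_of_real (x $ k) * f n)"
  by (simp add: Yop_def)

locale brane =
  fixes Dom :: "('i::countable) vec set" and X :: "3 \<Rightarrow> 'i op"
  assumes dom: "dense_subspace Dom" and sa: "\<forall>k. sa_op_on Dom (X k)"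
begin

lemma D_ell2: "f \<in> Dom \<Longrightarrow> f \<in> ell2"
  using dom unfolding dense_subspace_def by blast
lemma D_lin: "f \<in> Dom \<Longrightarrow> g \<in> Dom \<Longrightarrow> (\<lambda>n. a * f n + g n) \<in> Dom"
  using dom unfolding dense_subspace_def by blast
lemma D_zero: "(\<lambda>n. 0) \<in> Dom"
  using dom unfolding dense_subspace_def by blast
lemma D_scale: "f \<in> Dom \<Longrightarrow> (\<lambda>n. a * f n) \<in> Dom"
  using D_lin[OF _ D_zero, of f a] by simp
lemma D_X: "f \<in> Dom \<Longrightarrow> X k f \<in> Dom"
  using sa unfolding sa_op_on_def by blast
lemma X_herm: "f \<in> Dom \<Longrightarrow> g \<in> Dom \<Longrightarrow> inner2 (X k f) g = inner2 f (X k g)"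
  using sa unfolding sa_op_on_def by blast
lemma X_lin: "f \<in> Dom \<Longrightarrow> g \<in> Dom \<Longrightarrow> X k (\<lambda>n. a * f n + g n) = (\<lambda>n. a * X k f n + X k g n)"
  using sa unfolding sa_op_on_def by blast
lemma D_Y: "f \<in> Dom \<Longrightarrow> Yop X x k f \<in> Dom"
proof -
  assume f: "f \<in> Dom"
  have "Yop X x k f = (\<lambda>n. (- complex_of_real (x $ k)) * f n + X k f n)"
    by (auto simp: Yop_def)
  thus ?thesis using D_lin[OF f D_X[OF f]] by metis
qed
lemma Y_herm: "f \<in> Dom \<Longrightarrow> g \<in> Dom \<Longrightarrow> inner2 (Yop X x k f) g = inner2 f (Yop X x k g)"
  unfolding Yop_def using X_herm[of f g k] D_X[of f k] D_X[of g k]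
  by (simp add: D_ell2)
lemma Theta_ip:
  assumes f: "f \<in> Dom" and g: "g \<in> Dom"
  shows "inner2 g (Theta X i j f) = - \<i> * (inner2 (Yop X x i g) (Yop X x j f) - inner2 (Yop X x j g) (Yop X x i f))"
proof -
  have "inner2 g (Theta X i j f) = - \<i> * (inner2 g (X i (X j f)) - inner2 g (X j (X i f)))"
    unfolding Theta_def using f g by (simp add: D_ell2 D_X)
  also have "\<dots> = - \<i> * (inner2 (X i g) (X j f) - inner2 (X j g) (X i f))"
    using f g by (simp add: X_herm D_X)
  also have "\<dots> = - \<i> * (inner2 (Yop X x i g) (Yop X x j f) - inner2 (Yop X x j g) (Yop X x i f))"
  proof -
    have h1: "inner2 (Yop X x i g) f = inner2 g (Yop X x i f)" "inner2 (Yop X x j g) f = inner2 g (Yop X x j f)"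
      using f g by (simp_all add: Y_herm)
    show ?thesis
      apply (subst (1 2 3 4) X_Y[where X=X and x=x])
      apply (subst (1 2) ip_expand)
      using f g h1 by (simp_all add: D_ell2 D_Y algebra_simps)
  qed
  finally show ?thesis .
qed
end

lemma part1_alg:
  fixes p q r :: "3 \<Rightarrow> complex"
  assumes "\<And>k. Im (p k) = 0" "\<And>k. Im (q k) = 0"
    and "p 3 + cnj (r 1) - \<i> * cnj (r 2) = 0"
    and "r 3 + q 1 - \<i> * q 2 = 0"
    and "p 1 + \<i> * p 2 - cnj (r 3) = 0"
    and "r 1 + \<i> * r 2 - q 3 = 0"
  shows "p k + q k = 0"
proof -
  have A: "Im (p 1) = 0" "Im (p 2) = 0" "Im (p 3) = 0" "Im (q 1) = 0" "Im (q 2) = 0" "Im (q 3) = 0"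
    using assms(1,2) by auto
  have "p 1 + q 1 = 0 \<and> p 2 + q 2 = 0 \<and> p 3 + q 3 = 0"
    using A assms(3-6) by (simp add: complex_eq_iff)
  thus ?thesis using exhaust_3[of k] by auto
qed

context brane
begin

lemma kernel_part1:
  assumes a: "a \<in> Dom" and b: "b \<in> Dom" and D: "dirac X x (a, b) = ((\<lambda>_. 0), (\<lambda>_. 0))"
  shows "inner2 a (Yop X x k a) + inner2 b (Yop X x k b) = 0"
proof (rule part1_alg[where r="\<lambda>k. inner2 b (Yop X x k a)"])
  note E = dirac_eqs[OF D]
  note facts = a b D_ell2[OF a] D_ell2[OF b] D_ell2[OF D_Y[OF a]] D_ell2[OF D_Y[OF b]]
  have herm: "\<And>f g k. f \<in> Dom \<Longrightarrow> g \<in> Dom \<Longrightarrow> inner2 f (Yop X x k g) = cnj (inner2 g (Yop X x k f))"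
    by (metis Y_herm ip_cnj)
  show "Im (inner2 a (Yop X x k a)) = 0" for k
    using herm[OF a a, of k] by (metis Reals_cnj_iff complex_is_Real_iff)
  show "Im (inner2 b (Yop X x k b)) = 0" for k
    using herm[OF b b, of k] by (metis Reals_cnj_iff complex_is_Real_iff)
  have "inner2 a (\<lambda>n. Yop X x 3 a n + Yop X x 1 b n - \<i> * Yop X x 2 b n) = 0"
    using E(1) by simp
  thus "inner2 a (Yop X x 3 a) + cnj (inner2 b (Yop X x 1 a)) - \<i> * cnj (inner2 b (Yop X x 2 a)) = 0"
    using a b by (simp add: D_ell2 D_Y herm[OF a b])
  have "inner2 b (\<lambda>n. Yop X x 3 a n + Yop X x 1 b n - \<i> * Yop X x 2 b n) = 0"
    using E(1) by simp
  thus "inner2 b (Yop X x 3 a) + inner2 b (Yop X x 1 b) - \<i> * inner2 b (Yop X x 2 b) = 0"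
    using a b by (simp add: D_ell2 D_Y)
  have "inner2 a (\<lambda>n. Yop X x 1 a n + \<i> * Yop X x 2 a n - Yop X x 3 b n) = 0"
    using E(2) by simp
  thus "inner2 a (Yop X x 1 a) + \<i> * inner2 a (Yop X x 2 a) - cnj (inner2 b (Yop X x 3 a)) = 0"
    using a b by (simp add: D_ell2 D_Y herm[OF a b])
  have "inner2 b (\<lambda>n. Yop X x 1 a n + \<i> * Yop X x 2 a n - Yop X x 3 b n) = 0"
    using E(2) by simp
  thus "inner2 b (Yop X x 1 a) + \<i> * inner2 b (Yop X x 2 a) - inner2 b (Yop X x 3 b) = 0"
    using a b by (simp add: D_ell2 D_Y)
qed

lemma kernel_expect:
  assumes a: "a \<in> Dom" and b: "b \<in> Dom" and D: "dirac X x (a, b) = ((\<lambda>_. 0), (\<lambda>_. 0))"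
    and n: "spinor_inner (a, b) (a, b) = 1"
  shows "expect (a, b) (id_tensor (X k)) = complex_of_real (x $ k)"
proof -
  have "expect (a, b) (id_tensor (X k)) = inner2 a (X k a) + inner2 b (X k b)"
    by (simp add: expect_def id_tensor_def spinor_inner_def)
  also have "\<dots> = (inner2 a (Yop X x k a) + inner2 b (Yop X x k b)) + complex_of_real (x $ k) * (inner2 a a + inner2 b b)"
    apply (subst (1 2) X_Y[where X=X and x=x])
    using a b apply (simp add: D_ell2 D_Y) apply (simp add: algebra_simps)? done
  also have "\<dots> = complex_of_real (x $ k)"
    using kernel_part1[OF a b D] n by (simp add: spinor_inner_def)
  finally show ?thesis .
qed

end

context brane
begin

lemma D_Theta: "f \<in> Dom \<Longrightarrow> Theta X i j f \<in> Dom"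
proof -
  assume f: "f \<in> Dom"
  have "Theta X i j f = (\<lambda>n. (-\<i>) * X i (X j f) n + (\<i> * X j (X i f) n))"
    by (simp add: Theta_def fun_eq_iff algebra_simps)
  thus ?thesis using D_lin[OF D_X[OF D_X[OF f]] D_scale[OF D_X[OF D_X[OF f]]]] by metis
qed

lemma XX_ip:
  assumes f: "f \<in> Dom"
  shows "inner2 (X k f) (X k f) = inner2 (Yop X x k f) (Yop X x k f)
     + 2 * complex_of_real (x $ k) * inner2 f (Yop X x k f) + (complex_of_real (x $ k))\<^sup>2 * inner2 f f"
proof -
  have h: "inner2 (Yop X x k f) f = inner2 f (Yop X x k f)" using f by (simp add: Y_herm)
  show ?thesis
    apply (subst (1 2) X_Y[where X=X and x=x])
    apply (subst ip_expand)
    using f h by (simp_all add: D_ell2 D_Y power2_eq_square algebra_simps)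
qed

lemma Xsq_ip:
  assumes f: "f \<in> Dom"
  shows "inner2 f (Xsq X f) = inner2 (X 1 f) (X 1 f) + inner2 (X 2 f) (X 2 f) + inner2 (X 3 f) (X 3 f)"
proof -
  have "Xsq X f = (\<lambda>n. X 1 (X 1 f) n + X 2 (X 2 f) n + X 3 (X 3 f) n)"
    by (simp add: Xsq_def sum_3)
  hence "inner2 f (Xsq X f) = inner2 f (X 1 (X 1 f)) + inner2 f (X 2 (X 2 f)) + inner2 f (X 3 (X 3 f))"
    using f by (simp add: D_ell2 D_X)
  thus ?thesis using f by (simp add: X_herm D_X)
qed

lemma lc_aux: "(z::complex) = 0 \<Longrightarrow> a - b = c * z \<Longrightarrow> a = b"
  by simp

lemma kernel_part3:
  assumes a: "a \<in> Dom" and b: "b \<in> Dom" and D: "dirac X x (a, b) = ((\<lambda>_. 0), (\<lambda>_. 0))"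
    and nrm: "spinor_inner (a, b) (a, b) = 1"
  shows "uncertainty X (a, b) =
             (1/2) * (\<Sum>i\<in>UNIV. \<Sum>j\<in>UNIV. \<Sum>k\<in>UNIV.
                complex_of_real (levi_civita i j k) * expect (a, b) (sigma_tensor k (Theta X i j)))"
proof -
  note E = dirac_eqs[OF D]
  note P1 = kernel_part1[OF a b D]
  note ex = kernel_expect[OF a b D nrm]
  have n1: "inner2 a a + inner2 b b = 1" using nrm by (simp add: spinor_inner_def)
  have Z: "inner2 (\<lambda>n. Yop X x 3 a n + Yop X x 1 b n - \<i> * Yop X x 2 b n) (\<lambda>n. Yop X x 3 a n + Yop X x 1 b n - \<i> * Yop X x 2 b n)
    + inner2 (\<lambda>n. Yop X x 1 a n + \<i> * Yop X x 2 a n - Yop X x 3 b n) (\<lambda>n. Yop X x 1 a n + \<i> * Yop X x 2 a n - Yop X x 3 b n) = 0"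
    using E by simp
  have L: "uncertainty X (a, b) = (\<Sum>k\<in>UNIV. inner2 (Yop X x k a) (Yop X x k a) + inner2 (Yop X x k b) (Yop X x k b))"
  proof -
    have "uncertainty X (a, b) = inner2 a (Xsq X a) + inner2 b (Xsq X b) - (\<Sum>k\<in>UNIV. (complex_of_real (x $ k))\<^sup>2)"
      unfolding uncertainty_def ex by (simp add: expect_def id_tensor_def spinor_inner_def)
    also have "\<dots> = (\<Sum>k\<in>UNIV. inner2 (Yop X x k a) (Yop X x k a) + inner2 (Yop X x k b) (Yop X x k b)
       + 2 * complex_of_real (x $ k) * (inner2 a (Yop X x k a) + inner2 b (Yop X x k b))
       + (complex_of_real (x $ k))\<^sup>2 * (inner2 a a + inner2 b b)) - (\<Sum>k\<in>UNIV. (complex_of_real (x $ k))\<^sup>2)"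
      using a b by (simp add: Xsq_ip XX_ip[where x=x] sum_3 algebra_simps)
    also have "\<dots> = (\<Sum>k\<in>UNIV. inner2 (Yop X x k a) (Yop X x k a) + inner2 (Yop X x k b) (Yop X x k b))"
      using P1 n1 by (simp add: sum.distrib)
    finally show ?thesis .
  qed
  show ?thesis
    unfolding L
    using Z a b
    apply (simp add: sum_3 levi_vals expect_def sigma_tensor_def spinor_inner_def pauli_vals D_ell2 D_Y D_X D_Theta Theta_ip[where x=x])
    apply (erule lc_aux[where c=2])
    apply (simp add: algebra_simps)
    done
qed

end

lemma ip_tendsto0:
  assumes u: "u \<in> ell2" and ev: "eventually (\<lambda>t. h t \<in> ell2) F"
    and lim: "((\<lambda>t. Re (inner2 (h t) (h t))) \<longlongrightarrow> 0) F"
  shows "((\<lambda>t. inner2 u (h t)) \<longlongrightarrow> 0) F"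
proof (rule tendstoI)
  fix \<epsilon> :: real assume ep: "\<epsilon> > 0"
  define N where "N = Re (inner2 u u)"
  have N0: "N \<ge> 0" unfolding N_def using u by (rule ip_self_nonneg)
  define \<tau> where "\<tau> = \<epsilon> / (N + 1)"
  have tau: "\<tau> > 0" unfolding \<tau>_def using ep N0 by simp
  have tN: "\<tau> * N < \<epsilon>" unfolding \<tau>_def using ep N0 by (simp add: field_simps)
  have ev2: "eventually (\<lambda>t. Re (inner2 (h t) (h t)) < \<tau> * \<epsilon>) F"
    using order_tendstoD(2)[OF lim, of "\<tau> * \<epsilon>"] tau ep by simp
  show "eventually (\<lambda>t. dist (inner2 u (h t)) 0 < \<epsilon>) F"
    using ev ev2
  proof eventually_elim
    case (elim t)
    have "cmod (inner2 u (h t)) \<le> \<tau> / 2 * N + Re (inner2 (h t) (h t)) / (2 * \<tau>)"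
      unfolding N_def using ip_bound[OF u elim(1) tau] .
    also have "\<dots> < \<epsilon> / 2 + \<epsilon> / 2"
    proof (rule add_less_le_mono)
      show "\<tau> / 2 * N < \<epsilon> / 2" using tN by simp
      show "Re (inner2 (h t) (h t)) / (2 * \<tau>) \<le> \<epsilon> / 2"
        using elim(2) tau by (simp add: field_simps)
    qed
    finally show ?case by simp
  qed
qed

lemma ip_tendsto:
  assumes u: "u \<in> ell2" and g: "g \<in> ell2" and ev: "eventually (\<lambda>t. f t \<in> ell2) F"
    and lim: "((\<lambda>t. Re (inner2 (\<lambda>n. f t n - g n) (\<lambda>n. f t n - g n))) \<longlongrightarrow> 0) F"
  shows "((\<lambda>t. inner2 u (f t)) \<longlongrightarrow> inner2 u g) F"
proof (rule LIM_zero_cancel)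
  have "((\<lambda>t. inner2 u (\<lambda>n. f t n - g n)) \<longlongrightarrow> 0) F"
    by (rule ip_tendsto0[OF u _ lim]) (use ev g in \<open>auto elim: eventually_mono\<close>)
  moreover have "eventually (\<lambda>t. inner2 u (\<lambda>n. f t n - g n) = inner2 u (f t) - inner2 u g) F"
    using ev by eventually_elim (use u g in simp)
  ultimately show "((\<lambda>t. inner2 u (f t) - inner2 u g) \<longlongrightarrow> 0) F"
    by (rule Lim_transform_eventually)
qed

lemma sig_expand:
  assumes "a \<in> ell2" "b \<in> ell2" "c \<in> ell2" "d \<in> ell2"
  shows "spinor_inner (c, d) (sigma_tensor k id (a, b)) =
     pauli k $ 1 $ 1 * inner2 c a + pauli k $ 1 $ 2 * inner2 c b + pauli k $ 2 $ 1 * inner2 d a + pauli k $ 2 $ 2 * inner2 d b"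
  using assms by (simp add: spinor_inner_def sigma_tensor_def)

lemma lc2: "(z1::complex) = 0 \<Longrightarrow> z2 = 0 \<Longrightarrow> g = z1 - z2 \<Longrightarrow> g = 0"
  by simp

context brane
begin

lemma kernel_cross:
  assumes a: "a \<in> Dom" and b: "b \<in> Dom" and Dy: "dirac X y (a, b) = ((\<lambda>_. 0), (\<lambda>_. 0))"
    and c: "c \<in> Dom" and d: "d \<in> Dom" and Dx: "dirac X x (c, d) = ((\<lambda>_. 0), (\<lambda>_. 0))"
  shows "(\<Sum>k\<in>UNIV. complex_of_real (y $ k - x $ k) * spinor_inner (c, d) (sigma_tensor k id (a, b))) = 0"
proof -
  note Ex = dirac_eqs[OF Dx] and Ey = dirac_eqs[OF Dy]
  have Z1: "inner2 (\<lambda>n. Yop X x 3 c n + Yop X x 1 d n - \<i> * Yop X x 2 d n) a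
     + inner2 (\<lambda>n. Yop X x 1 c n + \<i> * Yop X x 2 c n - Yop X x 3 d n) b = 0"
    using Ex by simp
  have Z2: "inner2 c (\<lambda>n. Yop X y 3 a n + Yop X y 1 b n - \<i> * Yop X y 2 b n)
     + inner2 d (\<lambda>n. Yop X y 1 a n + \<i> * Yop X y 2 a n - Yop X y 3 b n) = 0"
    using Ey by simp
  show ?thesis
    using Z1 Z2 a b c d
    apply (simp add: sum_3 sig_expand D_ell2 pauli_vals)
    apply (unfold Yop_def)
    apply (simp add: D_ell2 D_X X_herm)
    apply (erule lc2, assumption)
    apply (simp add: algebra_simps)
    done
qed

end

lemma norm_part_tendsto:
  assumes ev: "eventually (\<lambda>t. h1 t \<in> ell2 \<and> h2 t \<in> ell2) F"
    and lim: "((\<lambda>t. spinor_norm (h1 t, h2 t)) \<longlongrightarrow> 0) F"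
  shows "((\<lambda>t. Re (inner2 (h1 t) (h1 t))) \<longlongrightarrow> 0) F"
    and "((\<lambda>t. Re (inner2 (h2 t) (h2 t))) \<longlongrightarrow> 0) F"
proof -
  have sq: "((\<lambda>t. (spinor_norm (h1 t, h2 t))\<^sup>2) \<longlongrightarrow> 0) F"
    using tendsto_power[OF lim, of 2] by simp
  have eq: "eventually (\<lambda>t. (spinor_norm (h1 t, h2 t))\<^sup>2 = Re (inner2 (h1 t) (h1 t)) + Re (inner2 (h2 t) (h2 t))) F"
    using ev by eventually_elim (simp add: spinor_norm_def spinor_inner_def ip_self_nonneg)
  show "((\<lambda>t. Re (inner2 (h1 t) (h1 t))) \<longlongrightarrow> 0) F"
  proof (rule tendsto_sandwich[OF _ _ tendsto_const sq])
    show "eventually (\<lambda>t. 0 \<le> Re (inner2 (h1 t) (h1 t))) F"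
      using ev by eventually_elim (simp add: ip_self_nonneg)
    show "eventually (\<lambda>t. Re (inner2 (h1 t) (h1 t)) \<le> (spinor_norm (h1 t, h2 t))\<^sup>2) F"
      using ev eq by eventually_elim (simp add: ip_self_nonneg)
  qed
  show "((\<lambda>t. Re (inner2 (h2 t) (h2 t))) \<longlongrightarrow> 0) F"
  proof (rule tendsto_sandwich[OF _ _ tendsto_const sq])
    show "eventually (\<lambda>t. 0 \<le> Re (inner2 (h2 t) (h2 t))) F"
      using ev by eventually_elim (simp add: ip_self_nonneg)
    show "eventually (\<lambda>t. Re (inner2 (h2 t) (h2 t)) \<le> (spinor_norm (h1 t, h2 t))\<^sup>2) F"
      using ev eq by eventually_elim (simp add: ip_self_nonneg)
  qed
qed

lemma deriv_quot:
  assumes "(\<gamma> has_vector_derivative v) (at 0)"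
  shows "((\<lambda>t. (\<gamma> t $ k - \<gamma> 0 $ k) / t) \<longlongrightarrow> v $ k) (at (0::real))"
proof -
  have "((\<lambda>t. \<gamma> t $ k) has_vector_derivative v $ k) (at 0)"
    using bounded_linear.has_vector_derivative[OF bounded_linear_vec_nth assms] .
  hence "((\<lambda>t. \<gamma> t $ k) has_field_derivative v $ k) (at 0)"
    by (simp add: has_real_derivative_iff_has_vector_derivative)
  thus ?thesis by (simp add: has_field_derivative_iff)
qed

theorem mainTheorem2:
  fixes Dom :: "('i::countable) vec set"
    and X :: "3 \<Rightarrow> 'i op"
    and \<Lambda> :: "real^3 \<Rightarrow> 'i spinor"
  assumes dom: "dense_subspace Dom"
    and sa: "\<forall>k. sa_op_on Dom (X k)"
    and state: "\<forall>x\<in>eigenmanifold Dom X. \<Lambda> x \<in> dirac_kernel Dom X x \<and> spinor_inner (\<Lambda> x) (\<Lambda> x) = 1"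
    and cont: "\<forall>x\<in>eigenmanifold Dom X. \<forall>e>0. \<exists>d>0. \<forall>y\<in>eigenmanifold Dom X. dist y x < d \<longrightarrow>
                 spinor_norm ((\<lambda>n. fst (\<Lambda> y) n - fst (\<Lambda> x) n), (\<lambda>n. snd (\<Lambda> y) n - snd (\<Lambda> x) n)) < e"
  shows "\<forall>x\<in>eigenmanifold Dom X.
           (\<forall>k. expect (\<Lambda> x) (id_tensor (X k)) = complex_of_real (x $ k))
         \<and> (\<chi> k. Re (expect (\<Lambda> x) (sigma_tensor k id))) \<in> normal_vectors_at (eigenmanifold Dom X) x
         \<and> uncertainty X (\<Lambda> x) =
             (1/2) * (\<Sum>i\<in>UNIV. \<Sum>j\<in>UNIV. \<Sum>k\<in>UNIV.
                complex_of_real (levi_civita i j k) * expect (\<Lambda> x) (sigma_tensor k (Theta X i j)))"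
proof -
  interpret brane Dom X using dom sa by unfold_locales
  let ?M = "eigenmanifold Dom X"
  show ?thesis
  proof (intro ballI conjI allI)
    fix x assume xM: "x \<in> ?M"
    obtain a b where ab: "\<Lambda> x = (a, b)" by (cases "\<Lambda> x")
    have kx: "\<Lambda> x \<in> dirac_kernel Dom X x" and nx: "spinor_inner (\<Lambda> x) (\<Lambda> x) = 1"
      using state xM by auto
    hence a: "a \<in> Dom" and b: "b \<in> Dom" and Dx: "dirac X x (a, b) = ((\<lambda>_. 0), (\<lambda>_. 0))"
      and n1: "spinor_inner (a, b) (a, b) = 1"
      using ab by (auto simp: dirac_kernel_def)
    show "expect (\<Lambda> x) (id_tensor (X k)) = complex_of_real (x $ k)" for k
      unfolding ab by (rule kernel_expect[OF a b Dx n1])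
    show "uncertainty X (\<Lambda> x) =
             (1/2) * (\<Sum>i\<in>UNIV. \<Sum>j\<in>UNIV. \<Sum>k\<in>UNIV.
                complex_of_real (levi_civita i j k) * expect (\<Lambda> x) (sigma_tensor k (Theta X i j)))"
      unfolding ab by (rule kernel_part3[OF a b Dx n1])
    show "(\<chi> k. Re (expect (\<Lambda> x) (sigma_tensor k id))) \<in> normal_vectors_at ?M x"
      unfolding normal_vectors_at_def
    proof (intro CollectI ballI)
      fix v assume "v \<in> tangent_vectors ?M x"
      then obtain \<gamma> e where e: "e > 0" and g0: "\<gamma> 0 = x" and gM: "\<forall>t\<in>{-e<..<e}. \<gamma> t \<in> ?M"
        and gd: "(\<gamma> has_vector_derivative v) (at 0)"
        unfolding tangent_vectors_def by blast
      define F where "F k t = spinor_inner (a, b) (sigma_tensor k id (\<Lambda> (\<gamma> t)))" for k t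
      define F0 where "F0 k = spinor_inner (a, b) (sigma_tensor k id (a, b))" for k
      have evM: "eventually (\<lambda>t. \<gamma> t \<in> ?M) (at (0::real))"
        unfolding eventually_at using e gM by (intro exI[of _ e]) (auto simp: dist_real_def abs_less_iff)
      have evK: "eventually (\<lambda>t. fst (\<Lambda> (\<gamma> t)) \<in> Dom \<and> snd (\<Lambda> (\<gamma> t)) \<in> Dom
           \<and> dirac X (\<gamma> t) (fst (\<Lambda> (\<gamma> t)), snd (\<Lambda> (\<gamma> t))) = ((\<lambda>_. 0), (\<lambda>_. 0))) (at (0::real))"
        using evM by eventually_elim (use state in \<open>auto simp: dirac_kernel_def\<close>)
      have evNZ: "eventually (\<lambda>t. t \<noteq> 0) (at (0::real))"
        by (simp add: eventually_at_filter)
      define G where "G t = (\<Sum>k\<in>UNIV. complex_of_real ((\<gamma> t $ k - x $ k) / t) * F k t)" for t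
      have evG: "eventually (\<lambda>t. G t = 0) (at (0::real))"
        using evK evNZ
      proof eventually_elim
        case (elim t)
        have "(\<Sum>k\<in>UNIV. complex_of_real (\<gamma> t $ k - x $ k) * F k t) = 0"
          unfolding F_def using kernel_cross[of "fst (\<Lambda> (\<gamma> t))" "snd (\<Lambda> (\<gamma> t))" "\<gamma> t" a b x] elim a b Dx
          by simp
        hence "complex_of_real (1 / t) * (\<Sum>k\<in>UNIV. complex_of_real (\<gamma> t $ k - x $ k) * F k t) = 0"
          by simp
        moreover have "G t = complex_of_real (1 / t) * (\<Sum>k\<in>UNIV. complex_of_real (\<gamma> t $ k - x $ k) * F k t)"
          unfolding G_def sum_distrib_left
          by (intro sum.cong refl) (simp add: of_real_divide)
        ultimately show ?case by simp
      qed
      have gc: "(\<gamma> \<longlongrightarrow> x) (at 0)"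
        using has_vector_derivative_continuous[OF gd] g0 by (simp add: isCont_def)
      have evE: "eventually (\<lambda>t. (\<lambda>n. fst (\<Lambda> (\<gamma> t)) n - a n) \<in> ell2 \<and> (\<lambda>n. snd (\<Lambda> (\<gamma> t)) n - b n) \<in> ell2) (at (0::real))"
        using evK by eventually_elim (use a b in \<open>simp add: D_ell2\<close>)
      have sn: "((\<lambda>t. spinor_norm ((\<lambda>n. fst (\<Lambda> (\<gamma> t)) n - a n), (\<lambda>n. snd (\<Lambda> (\<gamma> t)) n - b n))) \<longlongrightarrow> 0) (at 0)"
      proof (rule tendstoI)
        fix \<epsilon> :: real assume ep: "\<epsilon> > 0"
        obtain d where d: "d > 0" and dc: "\<forall>y\<in>?M. dist y x < d \<longrightarrow>
                 spinor_norm ((\<lambda>n. fst (\<Lambda> y) n - fst (\<Lambda> x) n), (\<lambda>n. snd (\<Lambda> y) n - snd (\<Lambda> x) n)) < \<epsilon>"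
          using cont xM ep by blast
        have "eventually (\<lambda>t. dist (\<gamma> t) x < d) (at 0)" using tendstoD[OF gc d] .
        thus "eventually (\<lambda>t. dist (spinor_norm ((\<lambda>n. fst (\<Lambda> (\<gamma> t)) n - a n), (\<lambda>n. snd (\<Lambda> (\<gamma> t)) n - b n))) 0 < \<epsilon>) (at 0)"
          using evM evE
        proof eventually_elim
          case (elim t)
          hence "spinor_norm ((\<lambda>n. fst (\<Lambda> (\<gamma> t)) n - a n), (\<lambda>n. snd (\<Lambda> (\<gamma> t)) n - b n)) < \<epsilon>"
            using dc ab by auto
          moreover have "spinor_norm ((\<lambda>n. fst (\<Lambda> (\<gamma> t)) n - a n), (\<lambda>n. snd (\<Lambda> (\<gamma> t)) n - b n)) \<ge> 0"
            using elim by (simp add: spinor_norm_def spinor_inner_def ip_self_nonneg)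
          ultimately show ?case by simp
        qed
      qed
      note NP = norm_part_tendsto[OF evE sn]
      have evA: "eventually (\<lambda>t. fst (\<Lambda> (\<gamma> t)) \<in> ell2) (at (0::real))"
        using evK by eventually_elim (simp add: D_ell2)
      have evB: "eventually (\<lambda>t. snd (\<Lambda> (\<gamma> t)) \<in> ell2) (at (0::real))"
        using evK by eventually_elim (simp add: D_ell2)
      have T: "((\<lambda>t. inner2 u (fst (\<Lambda> (\<gamma> t)))) \<longlongrightarrow> inner2 u a) (at 0)"
              "((\<lambda>t. inner2 u (snd (\<Lambda> (\<gamma> t)))) \<longlongrightarrow> inner2 u b) (at 0)" if "u \<in> ell2" for u
        using ip_tendsto[OF that D_ell2[OF a] evA NP(1)] ip_tendsto[OF that D_ell2[OF b] evB NP(2)] by auto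
      have limF: "((F k) \<longlongrightarrow> F0 k) (at 0)" for k
      proof -
        have "((\<lambda>t. pauli k $ 1 $ 1 * inner2 a (fst (\<Lambda> (\<gamma> t))) + pauli k $ 1 $ 2 * inner2 a (snd (\<Lambda> (\<gamma> t)))
               + pauli k $ 2 $ 1 * inner2 b (fst (\<Lambda> (\<gamma> t))) + pauli k $ 2 $ 2 * inner2 b (snd (\<Lambda> (\<gamma> t))))
              \<longlongrightarrow> F0 k) (at 0)"
          unfolding F0_def using a b
          by (simp add: sig_expand D_ell2) (intro tendsto_intros T D_ell2 a b)
        moreover have "eventually (\<lambda>t. pauli k $ 1 $ 1 * inner2 a (fst (\<Lambda> (\<gamma> t))) + pauli k $ 1 $ 2 * inner2 a (snd (\<Lambda> (\<gamma> t)))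
               + pauli k $ 2 $ 1 * inner2 b (fst (\<Lambda> (\<gamma> t))) + pauli k $ 2 $ 2 * inner2 b (snd (\<Lambda> (\<gamma> t))) = F k t) (at 0)"
          using evA evB
        proof eventually_elim
          case (elim t)
          show ?case unfolding F_def
            using sig_expand[OF elim(1) elim(2) D_ell2[OF a] D_ell2[OF b], of k] by simp
        qed
        ultimately show ?thesis by (rule Lim_transform_eventually)
      qed
      have limQ: "((\<lambda>t. (\<gamma> t $ k - x $ k) / t) \<longlongrightarrow> v $ k) (at 0)" for k
        using deriv_quot[OF gd, of k] g0 by simp
      have "(G \<longlongrightarrow> (\<Sum>k\<in>UNIV. complex_of_real (v $ k) * F0 k)) (at 0)"
        unfolding G_def by (intro tendsto_intros limQ limF)
      moreover have "(G \<longlongrightarrow> 0) (at 0)"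
        using evG by (simp add: tendsto_eventually)
      ultimately have S: "(\<Sum>k\<in>UNIV. complex_of_real (v $ k) * F0 k) = 0"
        using tendsto_unique[OF at_neq_bot] by blast
      have "(\<chi> k. Re (expect (\<Lambda> x) (sigma_tensor k id))) \<bullet> v = (\<Sum>k\<in>UNIV. Re (F0 k) * v $ k)"
        unfolding inner_vec_def F0_def expect_def ab by simp
      also have "\<dots> = Re (\<Sum>k\<in>UNIV. complex_of_real (v $ k) * F0 k)"
        by (simp add: sum_3 algebra_simps)
      also have "\<dots> = 0" using S by simp
      finally show "(\<chi> k. Re (expect (\<Lambda> x) (sigma_tensor k id))) \<bullet> v = 0" .
    qed
  qed
qed

end
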